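(* Under the standing assumptions, let $v$ be a vertex of degree $8$ in $G$. If there is a vertex $u$ of degree $2$ such that the edge $vu$ lies on a $3$-face, then there is no vertex $w$ of degree $3$ such that the edge $vw$ lies on a $3$-face.
   Context: Standing assumptions: A total $9$-coloring of a graph is an assignment of colors from $\{1,\dots,9\}$ to the vertices and edges such that adjacent vertices, edges sharing an endpoint, and a vertex and an incident edge receive different colors. A $4$-fan is the graph on six vertices $c,u_1,\dots,u_5$ with edges $cu_j$ ($1\le j\le5$) and $u_ju_{j+1}$ ($1\le j\le4$). $G$ is a minimal counterexample: $G$ is a simple planar graph with maximum degree $8$, containing no subgraph isomorphic to a $4$-fan, that has no total $9$-coloring, and such that every simple planar graph $H$ with maximum degree at most $8$, no subgraph isomorphic to a $4$-fan, and $|V(H)|+|E(H)|<|V(G)|+|E(G)|$ has a total $9$-coloring. $G$ is considered with a fixed plane embedding; a $3$-face is a face of length $3$. *)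

theory Defs
  imports "HOL-Analysis.Analysis"
begin

definition simple_graph :: "'a set \<Rightarrow> 'a set set \<Rightarrow> bool" where
  "simple_graph V E \<longleftrightarrow> finite V \<and>
     (\<forall>e\<in>E. \<exists>x y. x \<in> V \<and> y \<in> V \<and> x \<noteq> y \<and> e = {x, y})"

definition degree :: "'a set \<Rightarrow> 'a set set \<Rightarrow> 'a \<Rightarrow> nat" where
  "degree V E v = card {u \<in> V. {v, u} \<in> E}"

definition max_degree_eq :: "'a set \<Rightarrow> 'a set set \<Rightarrow> nat \<Rightarrow> bool" where
  "max_degree_eq V E d \<longleftrightarrow> (\<forall>v\<in>V. degree V E v \<le> d) \<and> (\<exists>v\<in>V. degree V E v = d)"

definition plane_embedding ::
  "'a set \<Rightarrow> 'a set set \<Rightarrow> ('a \<Rightarrow> complex) \<Rightarrow> ('a set \<Rightarrow> real \<Rightarrow> complex) \<Rightarrow> bool" where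
  "plane_embedding V E pos \<gamma> \<longleftrightarrow>
     inj_on pos V \<and>
     (\<forall>e\<in>E. arc (\<gamma> e) \<and>
        (\<exists>x y. e = {x, y} \<and> pathstart (\<gamma> e) = pos x \<and> pathfinish (\<gamma> e) = pos y) \<and>
        (\<forall>w\<in>V. pos w \<in> path_image (\<gamma> e) \<longrightarrow> w \<in> e)) \<and>
     (\<forall>e\<in>E. \<forall>e'\<in>E. e \<noteq> e' \<longrightarrow> path_image (\<gamma> e) \<inter> path_image (\<gamma> e') \<subseteq> pos ` (e \<inter> e'))"

definition planar :: "'a set \<Rightarrow> 'a set set \<Rightarrow> bool" where
  "planar V E \<longleftrightarrow> (\<exists>pos \<gamma>. plane_embedding V E pos \<gamma>)"

definition drawing ::
  "'a set \<Rightarrow> 'a set set \<Rightarrow> ('a \<Rightarrow> complex) \<Rightarrow> ('a set \<Rightarrow> real \<Rightarrow> complex) \<Rightarrow> complex set" where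
  "drawing V E pos \<gamma> = pos ` V \<union> (\<Union>e\<in>E. path_image (\<gamma> e))"

definition faces ::
  "'a set \<Rightarrow> 'a set set \<Rightarrow> ('a \<Rightarrow> complex) \<Rightarrow> ('a set \<Rightarrow> real \<Rightarrow> complex) \<Rightarrow> complex set set" where
  "faces V E pos \<gamma> = components (- drawing V E pos \<gamma>)"

definition is_3face ::
  "'a set \<Rightarrow> 'a set set \<Rightarrow> ('a \<Rightarrow> complex) \<Rightarrow> ('a set \<Rightarrow> real \<Rightarrow> complex) \<Rightarrow> complex set \<Rightarrow> bool" where
  "is_3face V E pos \<gamma> F \<longleftrightarrow> F \<in> faces V E pos \<gamma> \<and>
     (\<exists>a b c. a \<noteq> b \<and> b \<noteq> c \<and> a \<noteq> c \<and> {a, b} \<in> E \<and> {b, c} \<in> E \<and> {a, c} \<in> E \<and>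
        frontier F = path_image (\<gamma> {a, b}) \<union> path_image (\<gamma> {b, c}) \<union> path_image (\<gamma> {a, c}))"

definition edge_on_3face ::
  "'a set \<Rightarrow> 'a set set \<Rightarrow> ('a \<Rightarrow> complex) \<Rightarrow> ('a set \<Rightarrow> real \<Rightarrow> complex) \<Rightarrow> 'a set \<Rightarrow> bool" where
  "edge_on_3face V E pos \<gamma> e \<longleftrightarrow>
     (\<exists>F. is_3face V E pos \<gamma> F \<and> path_image (\<gamma> e) \<subseteq> frontier F)"

definition has_4fan :: "'a set \<Rightarrow> 'a set set \<Rightarrow> bool" where
  "has_4fan V E \<longleftrightarrow> (\<exists>c u1 u2 u3 u4 u5.
     distinct [c, u1, u2, u3, u4, u5] \<and> set [c, u1, u2, u3, u4, u5] \<subseteq> V \<and>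
     {c, u1} \<in> E \<and> {c, u2} \<in> E \<and> {c, u3} \<in> E \<and> {c, u4} \<in> E \<and> {c, u5} \<in> E \<and>
     {u1, u2} \<in> E \<and> {u2, u3} \<in> E \<and> {u3, u4} \<in> E \<and> {u4, u5} \<in> E)"

definition total_coloring ::
  "nat \<Rightarrow> 'a set \<Rightarrow> 'a set set \<Rightarrow> ('a \<Rightarrow> nat) \<Rightarrow> ('a set \<Rightarrow> nat) \<Rightarrow> bool" where
  "total_coloring k V E cv ce \<longleftrightarrow>
     (\<forall>v\<in>V. cv v \<in> {1..k}) \<and> (\<forall>e\<in>E. ce e \<in> {1..k}) \<and>
     (\<forall>x\<in>V. \<forall>y\<in>V. {x, y} \<in> E \<longrightarrow> cv x \<noteq> cv y) \<and>
     (\<forall>e\<in>E. \<forall>e'\<in>E. e \<noteq> e' \<and> e \<inter> e' \<noteq> {} \<longrightarrow> ce e \<noteq> ce e') \<and>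
     (\<forall>e\<in>E. \<forall>x\<in>e. cv x \<noteq> ce e)"

definition total_colorable :: "nat \<Rightarrow> 'a set \<Rightarrow> 'a set set \<Rightarrow> bool" where
  "total_colorable k V E \<longleftrightarrow> (\<exists>cv ce. total_coloring k V E cv ce)"

text \<open>Minimal counterexample. Competing graphs H are taken with vertices in nat
  (every finite graph is isomorphic to one on nat).\<close>
definition min_counterexample :: "'a set \<Rightarrow> 'a set set \<Rightarrow> bool" where
  "min_counterexample V E \<longleftrightarrow>
     simple_graph V E \<and> planar V E \<and> max_degree_eq V E 8 \<and> \<not> has_4fan V E \<and>
     \<not> total_colorable 9 V E \<and>
     (\<forall>(VH :: nat set) EH. simple_graph VH EH \<and> planar VH EH \<and>
        (\<forall>x\<in>VH. degree VH EH x \<le> 8) \<and> \<not> has_4fan VH EH \<and>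
        card VH + card EH < card V + card E \<longrightarrow> total_colorable 9 VH EH)"

end

theory Submission
  imports Defs
begin


lemma arc_inf: assumes "arc g" shows "infinite (path_image g)"
proof
  assume "finite (path_image g)"
  moreover have "inj_on g {0..1}" using assms by (simp add: arc_def)
  ultimately have "finite {0..1::real}" by (simp add: path_image_def finite_image_iff)
  thus False using infinite_Icc[of "0::real" 1] by simp
qed

lemma edge_in_tri:
  assumes pe: "plane_embedding V E pos \<gamma>" and e: "e \<in> E" and e1: "e1\<in>E" "e2\<in>E" "e3\<in>E"
   and sub: "path_image (\<gamma> e) \<subseteq> path_image (\<gamma> e1) \<union> path_image (\<gamma> e2) \<union> path_image (\<gamma> e3)"
  shows "e = e1 \<or> e = e2 \<or> e = e3"
proof (rule ccontr)
  assume ne: "\<not> ?thesis"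
  have d: "\<forall>e\<in>E. \<forall>e'\<in>E. e \<noteq> e' \<longrightarrow> path_image (\<gamma> e) \<inter> path_image (\<gamma> e') \<subseteq> pos ` (e \<inter> e')"
    by (rule conjunct2[OF conjunct2[OF pe[unfolded plane_embedding_def]]])
  have pe3: "arc (\<gamma> e) \<and> (\<exists>x y. e = {x, y} \<and> pathstart (\<gamma> e) = pos x \<and> pathfinish (\<gamma> e) = pos y) \<and>
        (\<forall>w\<in>V. pos w \<in> path_image (\<gamma> e) \<longrightarrow> w \<in> e)"
    by (rule bspec[OF conjunct1[OF conjunct2[OF pe[unfolded plane_embedding_def]]] e])
  have n1: "e \<noteq> e1" "e \<noteq> e2" "e \<noteq> e3" using ne by auto
  have i1: "path_image (\<gamma> e) \<inter> path_image (\<gamma> e1) \<subseteq> pos ` (e \<inter> e1)" using d e e1(1) n1(1) by simp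
  have i2: "path_image (\<gamma> e) \<inter> path_image (\<gamma> e2) \<subseteq> pos ` (e \<inter> e2)" using d e e1(2) n1(2) by simp
  have i3: "path_image (\<gamma> e) \<inter> path_image (\<gamma> e3) \<subseteq> pos ` (e \<inter> e3)" using d e e1(3) n1(3) by simp
  have "path_image (\<gamma> e) \<subseteq> (path_image (\<gamma> e) \<inter> path_image (\<gamma> e1)) \<union> (path_image (\<gamma> e) \<inter> path_image (\<gamma> e2))
      \<union> (path_image (\<gamma> e) \<inter> path_image (\<gamma> e3))" using sub by blast
  also have "\<dots> \<subseteq> pos ` (e \<inter> e1) \<union> pos ` (e \<inter> e2) \<union> pos ` (e \<inter> e3)"
    by (intro Un_mono i1 i2 i3)
  finally have "path_image (\<gamma> e) \<subseteq> pos ` (e \<inter> e1) \<union> pos ` (e \<inter> e2) \<union> pos ` (e \<inter> e3)" .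
  moreover obtain a b where "e = {a,b}" using conjunct1[OF conjunct2[OF pe3]] by blast
  hence "finite (pos ` (e \<inter> e1) \<union> pos ` (e \<inter> e2) \<union> pos ` (e \<inter> e3))" by simp
  ultimately have "finite (path_image (\<gamma> e))" by (rule finite_subset)
  moreover have "infinite (path_image (\<gamma> e))" by (rule arc_inf[OF conjunct1[OF pe3]])
  ultimately show False by simp
qed

lemma tri:
  assumes pe: "plane_embedding V E pos \<gamma>" and pq: "{p,q} \<in> E" and f: "edge_on_3face V E pos \<gamma> {p,q}"
  shows "\<exists>r. r \<noteq> p \<and> r \<noteq> q \<and> {p,r} \<in> E \<and> {q,r} \<in> E"
proof -
  obtain F where F3: "is_3face V E pos \<gamma> F" and sub: "path_image (\<gamma> {p,q}) \<subseteq> frontier F"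
    using f unfolding edge_on_3face_def by blast
  obtain a b c where abc: "a \<noteq> b" "b \<noteq> c" "a \<noteq> c" "{a, b} \<in> E" "{b, c} \<in> E" "{a, c} \<in> E"
    and fr: "frontier F = path_image (\<gamma> {a, b}) \<union> path_image (\<gamma> {b, c}) \<union> path_image (\<gamma> {a, c})"
    using F3 unfolding is_3face_def by blast
  have "{p,q} = {a,b} \<or> {p,q} = {b,c} \<or> {p,q} = {a,c}"
    by (rule edge_in_tri[OF pe pq abc(4,5,6)]) (use sub fr in simp)
  thus ?thesis using abc by (auto simp: doubleton_eq_iff insert_commute)
qed



definition good :: "'a set \<Rightarrow> 'a set set \<Rightarrow> 'a set set \<Rightarrow> 'a set \<Rightarrow> ('a \<Rightarrow> nat) \<Rightarrow> ('a set \<Rightarrow> nat) \<Rightarrow> bool" where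
"good V A E U cv ce \<longleftrightarrow> (\<forall>a\<in>V. cv a \<in> {1..9}) \<and> (\<forall>e\<in>E. ce e \<in> {1..9}) \<and>
   (\<forall>a\<in>V. \<forall>b\<in>V. {a,b} \<in> A \<longrightarrow> a \<notin> U \<longrightarrow> b \<notin> U \<longrightarrow> cv a \<noteq> cv b) \<and>
   (\<forall>e\<in>E. \<forall>e'\<in>E. e \<noteq> e' \<and> e \<inter> e' \<noteq> {} \<longrightarrow> ce e \<noteq> ce e') \<and>
   (\<forall>e\<in>E. \<forall>a\<in>e. a \<notin> U \<longrightarrow> cv a \<noteq> ce e)"

definition freec :: "'a set set \<Rightarrow> 'a set \<Rightarrow> ('a \<Rightarrow> nat) \<Rightarrow> ('a set \<Rightarrow> nat) \<Rightarrow> 'a \<Rightarrow> nat \<Rightarrow> bool" where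
"freec E U cv ce a c \<longleftrightarrow> (a \<notin> U \<longrightarrow> cv a \<noteq> c) \<and> (\<forall>e\<in>E. a \<in> e \<longrightarrow> ce e \<noteq> c)"

lemma goodI:
  assumes "\<And>a. a\<in>V \<Longrightarrow> cv a \<in> {1..9}" "\<And>e. e\<in>E \<Longrightarrow> ce e \<in> {1..9}"
   "\<And>a b. a\<in>V \<Longrightarrow> b\<in>V \<Longrightarrow> {a,b} \<in> A \<Longrightarrow> a \<notin> U \<Longrightarrow> b \<notin> U \<Longrightarrow> cv a \<noteq> cv b"
   "\<And>e e'. e\<in>E \<Longrightarrow> e'\<in>E \<Longrightarrow> e \<noteq> e' \<Longrightarrow> e \<inter> e' \<noteq> {} \<Longrightarrow> ce e \<noteq> ce e'"
   "\<And>e a. e\<in>E \<Longrightarrow> a\<in>e \<Longrightarrow> a \<notin> U \<Longrightarrow> cv a \<noteq> ce e"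
  shows "good V A E U cv ce"
  unfolding good_def using assms by simp

lemma good_vr: "good V A E U cv ce \<Longrightarrow> a\<in>V \<Longrightarrow> cv a \<in> {1..9}" unfolding good_def by simp
lemma good_er: "good V A E U cv ce \<Longrightarrow> e\<in>E \<Longrightarrow> ce e \<in> {1..9}" unfolding good_def by simp
lemma good_adj: "good V A E U cv ce \<Longrightarrow> a\<in>V \<Longrightarrow> b\<in>V \<Longrightarrow> {a,b} \<in> A \<Longrightarrow> a \<notin> U \<Longrightarrow> b \<notin> U \<Longrightarrow> cv a \<noteq> cv b"
  unfolding good_def by simp
lemma good_pr: "good V A E U cv ce \<Longrightarrow> e\<in>E \<Longrightarrow> e'\<in>E \<Longrightarrow> e \<noteq> e' \<Longrightarrow> e \<inter> e' \<noteq> {} \<Longrightarrow> ce e \<noteq> ce e'"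
  unfolding good_def by simp
lemma good_ve: "good V A E U cv ce \<Longrightarrow> e\<in>E \<Longrightarrow> a\<in>e \<Longrightarrow> a \<notin> U \<Longrightarrow> cv a \<noteq> ce e"
  unfolding good_def by simp

lemma freecI: "(a \<notin> U \<Longrightarrow> cv a \<noteq> c) \<Longrightarrow> (\<And>e. e\<in>E \<Longrightarrow> a \<in> e \<Longrightarrow> ce e \<noteq> c) \<Longrightarrow> freec E U cv ce a c"
  unfolding freec_def by simp
lemma freec_v: "freec E U cv ce a c \<Longrightarrow> a \<notin> U \<Longrightarrow> cv a \<noteq> c" unfolding freec_def by simp
lemma freec_e: "freec E U cv ce a c \<Longrightarrow> e\<in>E \<Longrightarrow> a \<in> e \<Longrightarrow> ce e \<noteq> c" unfolding freec_def by simp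

lemma good_mono: assumes g: "good V A E U cv ce" and s: "E0 \<subseteq> E" shows "good V A E0 U cv ce"
proof (rule goodI)
  show "\<And>a. a\<in>V \<Longrightarrow> cv a \<in> {1..9}" by (rule good_vr[OF g])
  show "\<And>e. e\<in>E0 \<Longrightarrow> ce e \<in> {1..9}" using good_er[OF g] s by blast
  show "\<And>a b. a\<in>V \<Longrightarrow> b\<in>V \<Longrightarrow> {a,b} \<in> A \<Longrightarrow> a \<notin> U \<Longrightarrow> b \<notin> U \<Longrightarrow> cv a \<noteq> cv b" by (rule good_adj[OF g])
  show "\<And>e e'. e\<in>E0 \<Longrightarrow> e'\<in>E0 \<Longrightarrow> e \<noteq> e' \<Longrightarrow> e \<inter> e' \<noteq> {} \<Longrightarrow> ce e \<noteq> ce e'"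
    using good_pr[OF g] s by blast
  show "\<And>e a. e\<in>E0 \<Longrightarrow> a\<in>e \<Longrightarrow> a \<notin> U \<Longrightarrow> cv a \<noteq> ce e" using good_ve[OF g] s by blast
qed

lemma freec_mono: assumes f: "freec E U cv ce a c" and s: "E0 \<subseteq> E" shows "freec E0 U cv ce a c"
  apply (rule freecI)
  using freec_v[OF f] freec_e[OF f] s by auto

lemma freec_del: assumes g: "good V A E U cv ce" and e: "e \<in> E" and a: "a \<in> e"
  shows "freec (E - {e}) U cv ce a (ce e)"
proof (rule freecI)
  assume "a \<notin> U" thus "cv a \<noteq> ce e" using good_ve[OF g e a] by simp
next
  fix f assume f: "f \<in> E - {e}" "a \<in> f"
  have "f \<noteq> e" "f \<inter> e \<noteq> {}" "f \<in> E" using f a by auto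
  thus "ce f \<noteq> ce e" using good_pr[OF g _ e] by simp
qed

lemma good_add:
  assumes g: "good V A E U cv ce" and ne: "{a,b} \<notin> E" and c: "c \<in> {1..9}"
    and fa: "freec E U cv ce a c" and fb: "freec E U cv ce b c"
  shows "good V A (insert {a,b} E) U cv (ce({a,b}:=c))"
proof (rule goodI)
  have 1: "\<And>e. e \<in> E \<Longrightarrow> (ce({a,b}:=c)) e = ce e" using ne by auto
  have key: "\<And>f. f \<in> E \<Longrightarrow> f \<inter> {a,b} \<noteq> {} \<Longrightarrow> ce f \<noteq> c"
  proof -
    fix f assume f: "f \<in> E" "f \<inter> {a,b} \<noteq> {}"
    hence "a \<in> f \<or> b \<in> f" by blast
    thus "ce f \<noteq> c" using freec_e[OF fa f(1)] freec_e[OF fb f(1)] by blast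
  qed
  show "\<And>x. x\<in>V \<Longrightarrow> cv x \<in> {1..9}" by (rule good_vr[OF g])
  show "\<And>x y. x\<in>V \<Longrightarrow> y\<in>V \<Longrightarrow> {x,y} \<in> A \<Longrightarrow> x \<notin> U \<Longrightarrow> y \<notin> U \<Longrightarrow> cv x \<noteq> cv y"
    by (rule good_adj[OF g])
  fix e assume e: "e \<in> insert {a,b} E"
  show "(ce({a, b} := c)) e \<in> {1..9}"
  proof (cases "e = {a,b}")
    case True thus ?thesis using c by simp
  next
    case False thus ?thesis using e 1 good_er[OF g] by simp
  qed
  {
    fix x assume x: "x \<in> e" "x \<notin> U"
    show "cv x \<noteq> (ce({a, b} := c)) e"
    proof (cases "e = {a,b}")
      case True thus ?thesis using x freec_v[OF fa] freec_v[OF fb] by auto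
    next
      case False
      hence "e \<in> E" using e by blast
      thus ?thesis using 1 good_ve[OF g _ x] by simp
    qed
  }
  fix e' assume e': "e' \<in> insert {a,b} E" and d: "e \<noteq> e'" "e \<inter> e' \<noteq> {}"
  show "(ce({a, b} := c)) e \<noteq> (ce({a, b} := c)) e'"
  proof (cases "e = {a,b}")
    case True
    hence "e' \<in> E" using e' d by blast
    moreover have "e' \<inter> {a,b} \<noteq> {}" using True d by blast
    ultimately show ?thesis using True key[of e'] d 1[of e'] by simp
  next
    case False
    hence eE: "e \<in> E" using e by blast
    show ?thesis
    proof (cases "e' = {a,b}")
      case True
      moreover have "e \<inter> {a,b} \<noteq> {}" using True d by blast
      ultimately show ?thesis using eE key[of e] d 1[of e] by simp
    next
      case False
      hence "e' \<in> E" using e' by blast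
      thus ?thesis using eE 1 d good_pr[OF g eE] by simp
    qed
  qed
qed

lemma freec_add: assumes f: "freec E U cv ce p c" and ne: "e \<notin> E" and h: "p \<in> e \<Longrightarrow> c' \<noteq> c"
  shows "freec (insert e E) U cv (ce(e:=c')) p c"
proof (rule freecI)
  show "p \<notin> U \<Longrightarrow> cv p \<noteq> c" by (rule freec_v[OF f])
  fix e0 assume "e0 \<in> insert e E" "p \<in> e0"
  thus "(ce(e := c')) e0 \<noteq> c" using h ne freec_e[OF f] by (cases "e0 = e") auto
qed

lemma exists_color: assumes "finite F" "card F < 9" shows "\<exists>k\<in>{1..9::nat}. k \<notin> F"
proof (rule ccontr)
  assume "\<not> ?thesis"
  hence "{1..9} \<subseteq> F" by blast
  hence "card {1..9::nat} \<le> card F" by (rule card_mono[OF assms(1)])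
  moreover have "card {1..9::nat} = 9" by simp
  ultimately show False using assms(2) by linarith
qed

lemma good_total: assumes "good V A E {} cv ce" "A = E" shows "total_coloring 9 V E cv ce"
  unfolding total_coloring_def
  using good_vr[OF assms(1)] good_er[OF assms(1)] good_adj[OF assms(1)] good_pr[OF assms(1)] good_ve[OF assms(1)] assms(2)
  by auto

lemma edges_at: assumes "simple_graph V A" shows "{e\<in>A. a\<in>e} \<subseteq> (\<lambda>b. {a,b}) ` {b\<in>V. {a,b}\<in>A}"
proof
  fix e assume "e \<in> {e\<in>A. a\<in>e}"
  then obtain p q where "p\<in>V" "q\<in>V" "e = {p,q}" "e\<in>A" "a\<in>e" using assms unfolding simple_graph_def by blast
  thus "e \<in> (\<lambda>b. {a,b}) ` {b\<in>V. {a,b}\<in>A}" by (auto simp: insert_commute)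
qed

lemma card_edges_at: assumes "simple_graph V A" "E \<subseteq> A" shows "card {e\<in>E. a\<in>e} \<le> degree V A a"
proof -
  have fin: "finite {b\<in>V. {a,b}\<in>A}" using assms(1) unfolding simple_graph_def by simp
  have "{e\<in>E. a\<in>e} \<subseteq> (\<lambda>b. {a,b}) ` {b\<in>V. {a,b}\<in>A}" using edges_at[OF assms(1)] assms(2) by blast
  hence "card {e\<in>E. a\<in>e} \<le> card ((\<lambda>b. {a,b}) ` {b\<in>V. {a,b}\<in>A})" by (rule card_mono[OF finite_imageI[OF fin]])
  also have "\<dots> \<le> degree V A a" unfolding degree_def by (rule card_image_le[OF fin])
  finally show ?thesis .
qed

lemma finite_edges_at: assumes "simple_graph V A" "E \<subseteq> A" shows "finite {e\<in>E. a\<in>e}"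
proof -
  have fin: "finite {b\<in>V. {a,b}\<in>A}" using assms(1) unfolding simple_graph_def by simp
  have "{e\<in>E. a\<in>e} \<subseteq> (\<lambda>b. {a,b}) ` {b\<in>V. {a,b}\<in>A}" using edges_at[OF assms(1)] assms(2) by blast
  thus ?thesis by (rule finite_subset) (rule finite_imageI[OF fin])
qed


lemma recolor:
  assumes g: "good V A E (insert a U) cv ce" and sg: "simple_graph V A" and EA: "E \<subseteq> A"
    and aV: "a \<in> V" and dg: "degree V A a \<le> 4"
  shows "\<exists>k. good V A E U (cv(a:=k)) ce"
proof -
  let ?N = "{b\<in>V. {a,b}\<in>A}"
  let ?F = "cv ` ?N \<union> ce ` {e\<in>E. a\<in>e}"
  have finN: "finite ?N" using sg unfolding simple_graph_def by simp
  have finE: "finite {e\<in>E. a\<in>e}" by (rule finite_edges_at[OF sg EA])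
  have "card ?F \<le> card (cv ` ?N) + card (ce ` {e\<in>E. a\<in>e})" by (rule card_Un_le)
  also have "\<dots> \<le> card ?N + card {e\<in>E. a\<in>e}"
  proof -
    have "card (cv ` ?N) \<le> card ?N" by (rule card_image_le[OF finN])
    moreover have "card (ce ` {e\<in>E. a\<in>e}) \<le> card {e\<in>E. a\<in>e}" by (rule card_image_le[OF finE])
    ultimately show ?thesis by linarith
  qed
  also have "\<dots> \<le> 8" using card_edges_at[OF sg EA, of a] dg unfolding degree_def by simp
  finally have c9: "card ?F < 9" by simp
  have finF: "finite ?F" using finN finE by (intro finite_UnI finite_imageI)
  from exists_color[OF finF c9] obtain k where k: "k \<in> {1..9}" "k \<notin> ?F" ..
  have noloop: "{a,a} \<notin> A"
  proof
    assume "{a,a} \<in> A"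
    then obtain p q where "p \<noteq> q" "{a,a} = {p,q}" using sg unfolding simple_graph_def by blast
    thus False by (auto simp: doubleton_eq_iff)
  qed
  have "good V A E U (cv(a:=k)) ce"
  proof (rule goodI)
    show "\<And>x. x\<in>V \<Longrightarrow> (cv(a := k)) x \<in> {1..9}" using good_vr[OF g] k by simp
    show "\<And>e. e\<in>E \<Longrightarrow> ce e \<in> {1..9}" by (rule good_er[OF g])
    show "\<And>e e'. e\<in>E \<Longrightarrow> e'\<in>E \<Longrightarrow> e \<noteq> e' \<Longrightarrow> e \<inter> e' \<noteq> {} \<Longrightarrow> ce e \<noteq> ce e'" by (rule good_pr[OF g])
    fix x y assume xy: "x\<in>V" "y\<in>V" "{x,y}\<in>A" "x\<notin>U" "y\<notin>U"
    show "(cv(a := k)) x \<noteq> (cv(a := k)) y"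
    proof (cases "x = a")
      case True
      then have "y \<noteq> a" using xy noloop by auto
      then show ?thesis using True xy k by auto
    next
      case False
      show ?thesis
      proof (cases "y = a")
        case True
        have "{a,x} \<in> A" using xy True by (simp add: insert_commute)
        then show ?thesis using True False xy k by auto
      next
        case False2: False
        then show ?thesis using False xy good_adj[OF g] by simp
      qed
    qed
  next
    fix e x assume ex: "e\<in>E" "x\<in>e" "x\<notin>U"
    show "(cv(a := k)) x \<noteq> ce e"
    proof (cases "x = a")
      case True thus ?thesis using ex k by auto
    next
      case False thus ?thesis using ex good_ve[OF g] by simp
    qed
  qed
  thus ?thesis by (rule exI)
qed



lemma transfer:
  fixes V :: "'a set" and E E' :: "'a set set"
  assumes sg: "simple_graph V E" and pl: "plane_embedding V E pos \<gamma>" and E'E: "E' \<subseteq> E"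
    and lt: "card E' < card E" and deg: "\<forall>x\<in>V. degree V E x \<le> 8" and nf: "\<not> has_4fan V E"
    and minl: "\<forall>(VH::nat set) EH. simple_graph VH EH \<and> planar VH EH \<and>
        (\<forall>x\<in>VH. degree VH EH x \<le> 8) \<and> \<not> has_4fan VH EH \<and>
        card VH + card EH < card V + card E \<longrightarrow> total_colorable 9 VH EH"
  shows "total_colorable 9 V E'"
proof -
  have finV: "finite V" using sg unfolding simple_graph_def by simp
  have Esub: "\<And>e. e \<in> E \<Longrightarrow> \<exists>a b. a \<in> V \<and> b \<in> V \<and> a \<noteq> b \<and> e = {a,b}"
    using sg unfolding simple_graph_def by simp
  have EPow: "E \<subseteq> Pow V" using Esub by fastforce
  have finE: "finite E" using EPow finV by (meson finite_Pow_iff finite_subset)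
  obtain f :: "'a \<Rightarrow> nat" and n where "f ` V = {i. i < n}" and inj: "inj_on f V"
    using finite_imp_inj_to_nat_seg[OF finV] by blast
  define g where "g = inv_into V f"
  have gf: "\<And>a. a \<in> V \<Longrightarrow> g (f a) = a" unfolding g_def using inj by (simp add: inv_into_f_f)
  have fg: "\<And>p. p \<in> f ` V \<Longrightarrow> f (g p) = p" unfolding g_def by (simp add: f_inv_into_f)
  have gV: "\<And>p. p \<in> f ` V \<Longrightarrow> g p \<in> V" unfolding g_def by (simp add: inv_into_into)
  have injP: "inj_on ((`) f) (Pow V)" by (rule inj_on_image_Pow[OF inj])
  define VH where "VH = f ` V"
  define EH where "EH = ((`) f) ` E'"
  have gimg: "\<And>e. e \<in> E' \<Longrightarrow> g ` (f ` e) = e"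
    unfolding g_def using inv_into_image_cancel[OF inj] EPow E'E by blast
  have memEH: "\<And>a b. a \<in> V \<Longrightarrow> b \<in> V \<Longrightarrow> {f a, f b} \<in> EH \<longleftrightarrow> {a,b} \<in> E'"
  proof -
    fix a b assume ab: "a \<in> V" "b \<in> V"
    have "{f a, f b} = f ` {a,b}" by simp
    moreover have "f ` {a,b} \<in> (`) f ` E' \<longleftrightarrow> {a,b} \<in> E'"
      using inj_on_image_mem_iff[OF injP, of "{a,b}" E'] ab EPow E'E by auto
    ultimately show "{f a, f b} \<in> EH \<longleftrightarrow> {a,b} \<in> E'" unfolding EH_def by simp
  qed
  have sgH: "simple_graph VH EH" unfolding simple_graph_def
  proof (intro conjI ballI)
    show "finite VH" unfolding VH_def using finV by simp
    fix e assume "e \<in> EH"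
    then obtain e0 where e0: "e0 \<in> E'" "e = f ` e0" unfolding EH_def by auto
    then obtain a b where ab: "a \<in> V" "b \<in> V" "a \<noteq> b" "e0 = {a,b}" using Esub E'E by blast
    have "f a \<noteq> f b" using inj ab by (meson inj_on_contraD)
    thus "\<exists>x y. x \<in> VH \<and> y \<in> VH \<and> x \<noteq> y \<and> e = {x, y}"
      using ab e0 unfolding VH_def by auto
  qed
  have plH: "planar VH EH" unfolding planar_def
  proof (intro exI)
    let ?pos = "pos \<circ> g" and ?\<gamma> = "\<lambda>e. \<gamma> (g ` e)"
    have pe: "inj_on pos V" "\<And>e. e \<in> E \<Longrightarrow> arc (\<gamma> e) \<and>
        (\<exists>x y. e = {x, y} \<and> pathstart (\<gamma> e) = pos x \<and> pathfinish (\<gamma> e) = pos y) \<and>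
        (\<forall>w\<in>V. pos w \<in> path_image (\<gamma> e) \<longrightarrow> w \<in> e)"
      "\<And>e e'. e \<in> E \<Longrightarrow> e' \<in> E \<Longrightarrow> e \<noteq> e' \<Longrightarrow> path_image (\<gamma> e) \<inter> path_image (\<gamma> e') \<subseteq> pos ` (e \<inter> e')"
      using pl unfolding plane_embedding_def by auto
    have P1: "inj_on ?pos VH"
    proof (rule inj_onI)
      fix p q assume pq: "p \<in> VH" "q \<in> VH" "?pos p = ?pos q"
      hence "g p = g q" using pe(1) gV unfolding VH_def by (simp add: inj_on_eq_iff)
      thus "p = q" using fg pq unfolding VH_def by metis
    qed
    have P2: "\<forall>e\<in>EH. arc (?\<gamma> e) \<and> (\<exists>x y. e = {x, y} \<and> pathstart (?\<gamma> e) = ?pos x \<and> pathfinish (?\<gamma> e) = ?pos y)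
       \<and> (\<forall>w\<in>VH. ?pos w \<in> path_image (?\<gamma> e) \<longrightarrow> w \<in> e)"
    proof
      fix e assume e: "e \<in> EH"
      then obtain e0 where e0: "e0 \<in> E'" "e = f ` e0" unfolding EH_def by auto
      have ge: "g ` e = e0" using gimg e0 by simp
      have e0E: "e0 \<in> E" using e0 E'E by blast
      have A1: "arc (?\<gamma> e)" using pe(2)[OF e0E] ge by simp
      obtain x y where xy: "e0 = {x,y}" "pathstart (\<gamma> e0) = pos x" "pathfinish (\<gamma> e0) = pos y"
        using pe(2)[OF e0E] by blast
      have xyV: "x \<in> V" "y \<in> V" using EPow e0E xy(1) by auto
      have A2: "\<exists>x y. e = {x, y} \<and> pathstart (?\<gamma> e) = ?pos x \<and> pathfinish (?\<gamma> e) = ?pos y"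
        apply (rule exI[of _ "f x"], rule exI[of _ "f y"])
        using xy xyV ge gf e0 by simp
      have A3: "\<forall>w\<in>VH. ?pos w \<in> path_image (?\<gamma> e) \<longrightarrow> w \<in> e"
      proof (intro ballI impI)
        fix w assume w: "w \<in> VH" "?pos w \<in> path_image (?\<gamma> e)"
        have "g w \<in> e0" using pe(2)[OF e0E] w gV ge unfolding VH_def by auto
        hence "f (g w) \<in> e" using e0 by simp
        thus "w \<in> e" using fg w unfolding VH_def by simp
      qed
      show "arc (?\<gamma> e) \<and> (\<exists>x y. e = {x, y} \<and> pathstart (?\<gamma> e) = ?pos x \<and> pathfinish (?\<gamma> e) = ?pos y)
       \<and> (\<forall>w\<in>VH. ?pos w \<in> path_image (?\<gamma> e) \<longrightarrow> w \<in> e)" using A1 A2 A3 by simp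
    qed
    have P3: "\<forall>e\<in>EH. \<forall>e'\<in>EH. e \<noteq> e' \<longrightarrow> path_image (?\<gamma> e) \<inter> path_image (?\<gamma> e') \<subseteq> ?pos ` (e \<inter> e')"
    proof (intro ballI impI)
      fix e e' assume e: "e \<in> EH" and e': "e' \<in> EH" and ne: "e \<noteq> e'"
      obtain e0 where e0: "e0 \<in> E'" "e = f ` e0" using e unfolding EH_def by auto
      obtain e1 where e1: "e1 \<in> E'" "e' = f ` e1" using e' unfolding EH_def by auto
      have ne0: "e0 \<noteq> e1" using ne e0 e1 by auto
      have "path_image (?\<gamma> e) \<inter> path_image (?\<gamma> e') = path_image (\<gamma> e0) \<inter> path_image (\<gamma> e1)"
        using gimg e0 e1 by simp
      also have "\<dots> \<subseteq> pos ` (e0 \<inter> e1)" using pe(3) e0 e1 ne0 E'E by blast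
      also have "\<dots> \<subseteq> ?pos ` (e \<inter> e')"
      proof
        fix p assume "p \<in> pos ` (e0 \<inter> e1)"
        then obtain a where a: "a \<in> e0" "a \<in> e1" "p = pos a" by blast
        have aV: "a \<in> V" using a EPow e0 E'E by blast
        have "f a \<in> e \<inter> e'" using a e0 e1 by simp
        moreover have "?pos (f a) = p" using gf aV a by simp
        ultimately show "p \<in> ?pos ` (e \<inter> e')" by (metis imageI)
      qed
      finally show "path_image (?\<gamma> e) \<inter> path_image (?\<gamma> e') \<subseteq> ?pos ` (e \<inter> e')" .
    qed
    show "plane_embedding VH EH ?pos ?\<gamma>" unfolding plane_embedding_def using P1 P2 P3 by blast
  qed
  have degH: "\<forall>p\<in>VH. degree VH EH p \<le> 8"
  proof
    fix p assume p: "p \<in> VH"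
    then obtain a where a: "a \<in> V" "p = f a" unfolding VH_def by auto
    have "{q \<in> VH. {p,q} \<in> EH} = f ` {b \<in> V. {a,b} \<in> E'}"
    proof
      show "{q \<in> VH. {p,q} \<in> EH} \<subseteq> f ` {b \<in> V. {a,b} \<in> E'}"
      proof
        fix q assume q: "q \<in> {q \<in> VH. {p,q} \<in> EH}"
        then obtain b where b: "b \<in> V" "q = f b" unfolding VH_def by auto
        have "{a,b} \<in> E'" using memEH[OF a(1) b(1)] q a b by simp
        thus "q \<in> f ` {b \<in> V. {a,b} \<in> E'}" using b by auto
      qed
      show "f ` {b \<in> V. {a,b} \<in> E'} \<subseteq> {q \<in> VH. {p,q} \<in> EH}"
        using memEH a unfolding VH_def by auto
    qed
    hence "degree VH EH p = card (f ` {b \<in> V. {a,b} \<in> E'})" unfolding degree_def by simp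
    also have "\<dots> \<le> card {b \<in> V. {a,b} \<in> E'}" by (rule card_image_le) (use finV in simp)
    also have "\<dots> \<le> card {b \<in> V. {a,b} \<in> E}" by (rule card_mono) (use finV E'E in auto)
    also have "\<dots> \<le> 8" using deg a unfolding degree_def by simp
    finally show "degree VH EH p \<le> 8" .
  qed
  have nfH: "\<not> has_4fan VH EH"
  proof
    assume "has_4fan VH EH"
    then obtain c u1 u2 u3 u4 u5 where d: "distinct [c, u1, u2, u3, u4, u5]" and s: "set [c, u1, u2, u3, u4, u5] \<subseteq> VH"
      and ed: "{c, u1} \<in> EH" "{c, u2} \<in> EH" "{c, u3} \<in> EH" "{c, u4} \<in> EH" "{c, u5} \<in> EH"
       "{u1, u2} \<in> EH" "{u2, u3} \<in> EH" "{u3, u4} \<in> EH" "{u4, u5} \<in> EH"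
      unfolding has_4fan_def by blast
    have bk: "\<And>p q. p \<in> VH \<Longrightarrow> q \<in> VH \<Longrightarrow> {p,q} \<in> EH \<Longrightarrow> {g p, g q} \<in> E"
    proof -
      fix p q assume pq: "p \<in> VH" "q \<in> VH" "{p,q} \<in> EH"
      have "{f (g p), f (g q)} \<in> EH" using pq fg unfolding VH_def by simp
      hence "{g p, g q} \<in> E'" using memEH gV pq unfolding VH_def by simp
      thus "{g p, g q} \<in> E" using E'E by blast
    qed
    have ginj: "inj_on g VH" unfolding VH_def g_def by (rule inj_on_inv_into) simp
    have "inj_on g (set [c, u1, u2, u3, u4, u5])" by (rule inj_on_subset[OF ginj s])
    hence "distinct (map g [c, u1, u2, u3, u4, u5])" unfolding distinct_map using d by blast
    moreover have "set (map g [c, u1, u2, u3, u4, u5]) \<subseteq> V" using s gV unfolding VH_def by auto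
    ultimately have "has_4fan V E" unfolding has_4fan_def
      apply -
      apply (rule exI[of _ "g c"], rule exI[of _ "g u1"], rule exI[of _ "g u2"], rule exI[of _ "g u3"],
          rule exI[of _ "g u4"], rule exI[of _ "g u5"])
      using bk ed s by simp
    thus False using nf by simp
  qed
  have cardV: "card VH = card V" unfolding VH_def by (rule card_image[OF inj])
  have cardE: "card EH = card E'" unfolding EH_def
    by (rule card_image) (rule inj_on_subset[OF injP], use EPow E'E in blast)
  have "total_colorable 9 VH EH" using minl sgH plH degH nfH cardV cardE lt by simp
  then obtain cv ce where tc: "total_coloring 9 VH EH cv ce" unfolding total_colorable_def by blast
  have "total_coloring 9 V E' (cv \<circ> f) (\<lambda>e. ce (f ` e))" unfolding total_coloring_def
  proof (intro conjI ballI impI)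
    fix a assume "a \<in> V" thus "(cv \<circ> f) a \<in> {1..9}" using tc unfolding total_coloring_def VH_def by simp
  next
    fix e assume "e \<in> E'" thus "ce (f ` e) \<in> {1..9}" using tc unfolding total_coloring_def EH_def by simp
  next
    fix a b assume ab: "a \<in> V" "b \<in> V" "{a,b} \<in> E'"
    have "{f a, f b} \<in> EH" using memEH ab by simp
    thus "(cv \<circ> f) a \<noteq> (cv \<circ> f) b" using tc ab unfolding total_coloring_def VH_def by simp
  next
    fix e e' assume ee: "e \<in> E'" "e' \<in> E'" "e \<noteq> e' \<and> e \<inter> e' \<noteq> {}"
    have "f ` e \<noteq> f ` e'" using inj_onD[OF injP] ee EPow E'E by blast
    moreover have "f ` e \<inter> f ` e' \<noteq> {}" using ee by blast
    moreover have "f ` e \<in> EH" "f ` e' \<in> EH" using ee unfolding EH_def by auto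
    ultimately show "ce (f ` e) \<noteq> ce (f ` e')" using tc unfolding total_coloring_def by simp
  next
    fix e x assume "e \<in> E'" "x \<in> e"
    moreover have "f ` e \<in> EH" using \<open>e \<in> E'\<close> unfolding EH_def by auto
    ultimately show "(cv \<circ> f) x \<noteq> ce (f ` e)" using tc unfolding total_coloring_def by simp
  qed
  thus ?thesis unfolding total_colorable_def by blast
qed



lemma case1:
  assumes g: "good V E (E - {{u,v}}) U cv ce" and uU: "u \<in> U" and m: "m \<in> {1..9}"
    and fv: "freec (E - {{u,v}}) U cv ce v m" and Eu: "\<And>e. e\<in>E \<Longrightarrow> u\<in>e \<Longrightarrow> e = {u,v} \<or> e = {u,x}"
    and uv: "{u,v} \<in> E" and neq: "ce {u,x} \<noteq> m"
  shows "\<exists>ce'. good V E E U cv ce'"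
proof -
  have fu: "freec (E - {{u,v}}) U cv ce u m"
  proof (rule freecI)
    show "u \<notin> U \<Longrightarrow> cv u \<noteq> m" using uU by simp
    fix e assume "e \<in> E - {{u,v}}" "u \<in> e"
    hence "e = {u,x}" using Eu by auto
    thus "ce e \<noteq> m" using neq by simp
  qed
  have "good V E (insert {u,v} (E - {{u,v}})) U cv (ce({u,v}:=m))" by (rule good_add[OF g _ m fu fv]) simp
  moreover have "insert {u,v} (E - {{u,v}}) = E" using uv by blast
  ultimately have "good V E E U cv (ce({u,v}:=m))" by simp
  thus ?thesis by blast
qed

locale conf =
  fixes V :: "'a set" and E :: "'a set set" and v u x w y z :: 'a
  assumes Eu: "\<And>e. e\<in>E \<Longrightarrow> u\<in>e \<Longrightarrow> e = {u,v} \<or> e = {u,x}"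
  and Ew: "\<And>e. e\<in>E \<Longrightarrow> w\<in>e \<Longrightarrow> e = {w,v} \<or> e = {w,y} \<or> e = {w,z}"
  and inE: "{u,v}\<in>E" "{u,x}\<in>E" "{v,x}\<in>E" "{v,w}\<in>E" "{v,y}\<in>E" "{w,y}\<in>E" "{w,z}\<in>E"
  and dist: "u\<noteq>v" "u\<noteq>x" "v\<noteq>x" "v\<noteq>w" "u\<noteq>w" "w\<noteq>x" "v\<noteq>y" "w\<noteq>y" "w\<noteq>z" "u\<noteq>y" "u\<noteq>z" "v\<noteq>z"
begin

lemmas ds = dist dist[THEN not_sym]

lemma inE': "{u,x} \<in> E - {{u,v}}" "{v,x} \<in> E - {{u,v}}" "{v,w} \<in> E - {{u,v}}" "{v,y} \<in> E - {{u,v}}"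
  "{w,y} \<in> E - {{u,v}}" "{w,z} \<in> E - {{u,v}}"
  using inE ds by (auto simp: doubleton_eq_iff)

lemma step2:
  assumes g: "good V E (E - {{u,v}}) {u,w} cv ce" and c: "c \<in> {1..9}"
  and fv: "freec (E - {{u,v}}) {u,w} cv ce v c" and cux: "ce {u,x} = c"
  and fw: "freec (E - {{u,v}} - {{v,w}}) {u,w} cv ce w c"
  shows "\<exists>ce'. good V E E {u,w} cv ce'"
proof -
  let ?E' = "E - {{u,v}}"
  let ?E1 = "?E' - {{v,w}}"
  let ?ce1 = "ce({v,w}:=c)"
  let ?b = "ce {v,w}"
  have g1: "good V E ?E1 {u,w} cv ce" by (rule good_mono[OF g]) blast
  have ins1: "insert {v,w} ?E1 = ?E'" using inE' by blast
  have "good V E (insert {v,w} ?E1) {u,w} cv ?ce1"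
    by (rule good_add[OF g1 _ c freec_mono[OF fv] fw]) auto
  hence g2: "good V E ?E' {u,w} cv ?ce1" using ins1 by simp
  have bc: "?b \<noteq> c" using freec_e[OF fv inE'(3)] by simp
  have br: "?b \<in> {1..9}" using good_er[OF g inE'(3)] .
  have "freec ?E1 {u,w} cv ce v ?b" by (rule freec_del[OF g inE'(3)]) simp
  hence "freec (insert {v,w} ?E1) {u,w} cv ?ce1 v ?b" by (rule freec_add) (use bc in auto)
  hence fvb: "freec ?E' {u,w} cv ?ce1 v ?b" using ins1 by simp
  have fub: "freec ?E' {u,w} cv ?ce1 u ?b"
  proof (rule freecI)
    show "u \<notin> {u,w} \<Longrightarrow> cv u \<noteq> ?b" by simp
    fix e assume "e \<in> ?E'" "u \<in> e"
    hence "e = {u,x}" using Eu by auto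
    moreover have "{u,x} \<noteq> {v,w}" using ds by (auto simp: doubleton_eq_iff)
    ultimately show "?ce1 e \<noteq> ?b" using cux bc by simp
  qed
  have "good V E (insert {u,v} ?E') {u,w} cv (?ce1({u,v}:=?b))"
    by (rule good_add[OF g2 _ br fub fvb]) simp
  moreover have "insert {u,v} ?E' = E" using inE by blast
  ultimately have "good V E E {u,w} cv (?ce1({u,v}:=?b))" by simp
  thus ?thesis by blast
qed

lemma step3:
  assumes g: "good V E (E - {{u,v}}) {u,w} cv ce" and m: "m \<in> {1..9}"
  and fv: "freec (E - {{u,v}}) {u,w} cv ce v m" and cux: "ce {u,x} = m"
  shows "good V E (E - {{u,v}}) {u,w} cv (ce({v,x}:=m, {u,x}:=ce {v,x}))
       \<and> freec (E - {{u,v}}) {u,w} cv (ce({v,x}:=m, {u,x}:=ce {v,x})) v (ce {v,x})"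
proof -
  let ?E' = "E - {{u,v}}"
  let ?E3 = "?E' - {{u,x}} - {{v,x}}"
  let ?gx = "ce {v,x}"
  let ?ce2 = "ce({v,x}:=m)"
  have gxr: "?gx \<in> {1..9}" using good_er[OF g inE'(2)] .
  have mgx: "?gx \<noteq> m" using freec_e[OF fv inE'(2)] by simp
  have uxvx: "{u,x} \<noteq> {v,x}" using ds by (auto simp: doubleton_eq_iff)
  have g3: "good V E ?E3 {u,w} cv ce" by (rule good_mono[OF g]) blast
  have fvm: "freec ?E3 {u,w} cv ce v m" by (rule freec_mono[OF fv]) blast
  have "freec (?E' - {{u,x}}) {u,w} cv ce x m" using freec_del[OF g inE'(1), of x] cux by simp
  hence fxm: "freec ?E3 {u,w} cv ce x m" by (rule freec_mono) blast
  have gA: "good V E (insert {v,x} ?E3) {u,w} cv ?ce2"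
    by (rule good_add[OF g3 _ m fvm fxm]) simp
  have fu: "freec (insert {v,x} ?E3) {u,w} cv ?ce2 u ?gx"
  proof (rule freecI)
    show "u \<notin> {u,w} \<Longrightarrow> cv u \<noteq> ?gx" by simp
    fix e assume e: "e \<in> insert {v,x} ?E3" "u \<in> e"
    have "e \<noteq> {v,x}" using e(2) ds by auto
    hence "e \<in> E" "e \<noteq> {u,v}" "e \<noteq> {u,x}" using e by auto
    thus "?ce2 e \<noteq> ?gx" using Eu e(2) by blast
  qed
  have "freec (?E' - {{v,x}}) {u,w} cv ce x ?gx" by (rule freec_del[OF g inE'(2)]) simp
  hence "freec ?E3 {u,w} cv ce x ?gx" by (rule freec_mono) blast
  hence fx: "freec (insert {v,x} ?E3) {u,w} cv ?ce2 x ?gx" by (rule freec_add) (use mgx in auto)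
  have gB: "good V E (insert {u,x} (insert {v,x} ?E3)) {u,w} cv (?ce2({u,x}:=?gx))"
    by (rule good_add[OF gA _ gxr fu fx]) (use uxvx in simp)
  have seq: "insert {u,x} (insert {v,x} ?E3) = ?E'" using inE' by blast
  have "freec (?E' - {{v,x}}) {u,w} cv ce v ?gx" by (rule freec_del[OF g inE'(2)]) simp
  hence "freec ?E3 {u,w} cv ce v ?gx" by (rule freec_mono) blast
  hence "freec (insert {v,x} ?E3) {u,w} cv ?ce2 v ?gx" by (rule freec_add) (use mgx in auto)
  hence "freec (insert {u,x} (insert {v,x} ?E3)) {u,w} cv (?ce2({u,x}:=?gx)) v ?gx"
    by (rule freec_add) (use uxvx ds in auto)
  thus ?thesis using gB seq by simp
qed

lemma step4:
  assumes g: "good V E (E - {{u,v}}) {u,w} cv ce" and c: "c \<in> {1..9}"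
  and fv: "freec (E - {{u,v}}) {u,w} cv ce v c" and cux: "ce {u,x} = c"
  and cwy: "ce {w,y} = c" and hz: "ce {w,z} \<noteq> ce {v,y}"
  shows "\<exists>ce'. good V E E {u,w} cv ce'"
proof -
  let ?E' = "E - {{u,v}}"
  let ?E6 = "?E' - {{v,y}} - {{w,y}}"
  let ?ga = "ce {v,y}"
  let ?ce2 = "ce({v,y}:=c)"
  let ?ce4 = "?ce2({w,y}:=?ga)"
  have gar: "?ga \<in> {1..9}" using good_er[OF g inE'(4)] .
  have cga: "?ga \<noteq> c" using freec_e[OF fv inE'(4)] by simp
  have vywy: "{v,y} \<noteq> {w,y}" using ds by (auto simp: doubleton_eq_iff)
  have g6: "good V E ?E6 {u,w} cv ce" by (rule good_mono[OF g]) blast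
  have fvc: "freec ?E6 {u,w} cv ce v c" by (rule freec_mono[OF fv]) blast
  have "freec (?E' - {{w,y}}) {u,w} cv ce y c" using freec_del[OF g inE'(5), of y] cwy by simp
  hence fyc: "freec ?E6 {u,w} cv ce y c" by (rule freec_mono) blast
  have gA: "good V E (insert {v,y} ?E6) {u,w} cv ?ce2"
    by (rule good_add[OF g6 _ c fvc fyc]) simp
  have vwvy: "ce {v,w} \<noteq> ?ga"
    by (rule good_pr[OF g inE'(3) inE'(4)]) (use ds in \<open>auto simp: doubleton_eq_iff\<close>)
  have fw: "freec (insert {v,y} ?E6) {u,w} cv ?ce2 w ?ga"
  proof (rule freecI)
    show "w \<notin> {u,w} \<Longrightarrow> cv w \<noteq> ?ga" by simp
    fix e assume e: "e \<in> insert {v,y} ?E6" "w \<in> e"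
    have "e \<noteq> {v,y}" using e(2) ds by auto
    hence eE: "e \<in> E" "e \<noteq> {w,y}" "e \<noteq> {v,y}" using e by auto
    hence "e = {w,v} \<or> e = {w,z}" using Ew e(2) by blast
    thus "?ce2 e \<noteq> ?ga"
    proof
      assume "e = {w,v}"
      hence "e = {v,w}" by (simp add: insert_commute)
      thus ?thesis using vwvy eE by simp
    next
      assume "e = {w,z}"
      thus ?thesis using hz eE by simp
    qed
  qed
  have "freec (?E' - {{v,y}}) {u,w} cv ce y ?ga" by (rule freec_del[OF g inE'(4)]) simp
  hence "freec ?E6 {u,w} cv ce y ?ga" by (rule freec_mono) blast
  hence fy: "freec (insert {v,y} ?E6) {u,w} cv ?ce2 y ?ga" by (rule freec_add) (use cga in auto)
  have gB: "good V E (insert {w,y} (insert {v,y} ?E6)) {u,w} cv ?ce4"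
    by (rule good_add[OF gA _ gar fw fy]) (use vywy in simp)
  have seq: "insert {w,y} (insert {v,y} ?E6) = ?E'" using inE' by blast
  have gB': "good V E ?E' {u,w} cv ?ce4" using gB seq by simp
  have "freec (?E' - {{v,y}}) {u,w} cv ce v ?ga" by (rule freec_del[OF g inE'(4)]) simp
  hence "freec ?E6 {u,w} cv ce v ?ga" by (rule freec_mono) blast
  hence "freec (insert {v,y} ?E6) {u,w} cv ?ce2 v ?ga" by (rule freec_add) (use cga in auto)
  hence "freec (insert {w,y} (insert {v,y} ?E6)) {u,w} cv ?ce4 v ?ga"
    by (rule freec_add) (use vywy ds in auto)
  hence fv4: "freec ?E' {u,w} cv ?ce4 v ?ga" using seq by simp
  have fu4: "freec ?E' {u,w} cv ?ce4 u ?ga"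
  proof (rule freecI)
    show "u \<notin> {u,w} \<Longrightarrow> cv u \<noteq> ?ga" by simp
    fix e assume "e \<in> ?E'" "u \<in> e"
    hence "e = {u,x}" using Eu by auto
    moreover have "{u,x} \<noteq> {v,y}" "{u,x} \<noteq> {w,y}" using ds by (auto simp: doubleton_eq_iff)
    ultimately show "?ce4 e \<noteq> ?ga" using cux cga by simp
  qed
  have "good V E (insert {u,v} ?E') {u,w} cv (?ce4({u,v}:=?ga))"
    by (rule good_add[OF gB' _ gar fu4 fv4]) simp
  moreover have "insert {u,v} ?E' = E" using inE by blast
  ultimately have "good V E E {u,w} cv (?ce4({u,v}:=?ga))" by simp
  thus ?thesis by blast
qed

lemma wfree:
  assumes "\<not> freec (E - {{u,v}} - {{v,w}}) {u,w} cv ce w c"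
  shows "ce {w,y} = c \<or> ce {w,z} = c"
proof (rule ccontr)
  assume a: "\<not> ?thesis"
  have "freec (E - {{u,v}} - {{v,w}}) {u,w} cv ce w c"
  proof (rule freecI)
    show "w \<notin> {u,w} \<Longrightarrow> cv w \<noteq> c" by simp
    fix e assume e: "e \<in> E - {{u,v}} - {{v,w}}" "w \<in> e"
    have "e \<noteq> {w,v}" using e by (auto simp: insert_commute)
    hence "e = {w,y} \<or> e = {w,z}" using Ew e by blast
    thus "ce e \<noteq> c" using a by blast
  qed
  thus False using assms by simp
qed

lemma main:
  assumes g: "good V E (E - {{u,v}}) {u,w} cv ce" and m: "m \<in> {1..9}"
  and fv: "freec (E - {{u,v}}) {u,w} cv ce v m"
  shows "\<exists>ce'. good V E E {u,w} cv ce'"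
proof (cases "ce {u,x} = m")
  case False thus ?thesis using case1[OF g _ m fv Eu inE(1) False] by simp
next
  case cux: True
  show ?thesis
  proof (cases "freec (E - {{u,v}} - {{v,w}}) {u,w} cv ce w m")
    case True thus ?thesis by (rule step2[OF g m fv cux])
  next
    case nf1: False
    have wm: "ce {w,y} = m \<or> ce {w,z} = m" by (rule wfree[OF nf1])
    let ?gx = "ce {v,x}"
    let ?ce3 = "ce({v,x}:=m, {u,x}:=ce {v,x})"
    have s3: "good V E (E - {{u,v}}) {u,w} cv ?ce3 \<and> freec (E - {{u,v}}) {u,w} cv ?ce3 v ?gx"
      by (rule step3[OF g m fv cux])
    have g3: "good V E (E - {{u,v}}) {u,w} cv ?ce3" using s3 by simp
    have fv3: "freec (E - {{u,v}}) {u,w} cv ?ce3 v ?gx" using s3 by simp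
    have c3ux: "?ce3 {u,x} = ?gx" by simp
    have gxr: "?gx \<in> {1..9}" using good_er[OF g inE'(2)] .
    have mgx: "?gx \<noteq> m" using freec_e[OF fv inE'(2)] by simp
    have neqs: "{w,y} \<noteq> {v,x}" "{w,y} \<noteq> {u,x}" "{w,z} \<noteq> {v,x}" "{w,z} \<noteq> {u,x}"
      using ds by (auto simp: doubleton_eq_iff)
    have c3w: "?ce3 {w,y} = ce {w,y}" "?ce3 {w,z} = ce {w,z}" using neqs by simp_all
    show ?thesis
    proof (cases "freec (E - {{u,v}} - {{v,w}}) {u,w} cv ?ce3 w ?gx")
      case True thus ?thesis by (rule step2[OF g3 gxr fv3 c3ux])
    next
      case nf2: False
      have wg: "ce {w,y} = ?gx \<or> ce {w,z} = ?gx" using wfree[OF nf2] c3w by simp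
      show ?thesis
      proof (cases "ce {w,y} = m")
        case True
        hence wz: "ce {w,z} = ?gx" using wg mgx by auto
        have xy: "x \<noteq> y"
        proof
          assume "x = y"
          hence "ce {w,x} = ce {u,x}" using True cux by simp
          moreover have "ce {w,x} \<noteq> ce {u,x}"
            by (rule good_pr[OF g _ inE'(1)]) (use inE' \<open>x = y\<close> ds in \<open>auto simp: doubleton_eq_iff\<close>)
          ultimately show False by simp
        qed
        have "?gx \<noteq> ce {v,y}"
          by (rule good_pr[OF g inE'(2) inE'(4)]) (use xy ds in \<open>auto simp: doubleton_eq_iff\<close>)
        hence "ce {w,z} \<noteq> ce {v,y}" using wz by simp
        thus ?thesis by (rule step4[OF g m fv cux True])
      next
        case False
        hence wy: "ce {w,y} = ?gx" and wz: "ce {w,z} = m" using wg wm mgx by auto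
        have xy: "x \<noteq> y"
        proof
          assume "x = y"
          hence "ce {w,x} = ce {v,x}" using wy by simp
          moreover have "ce {w,x} \<noteq> ce {v,x}"
            by (rule good_pr[OF g _ inE'(2)]) (use inE' \<open>x = y\<close> ds in \<open>auto simp: doubleton_eq_iff\<close>)
          ultimately show False by simp
        qed
        have vyn: "{v,y} \<noteq> {v,x}" "{v,y} \<noteq> {u,x}" using xy ds by (auto simp: doubleton_eq_iff)
        have "ce {v,y} \<noteq> m" using freec_e[OF fv inE'(4)] by simp
        hence "?ce3 {w,z} \<noteq> ?ce3 {v,y}" using c3w wz vyn by simp
        moreover have "?ce3 {w,y} = ?gx" using c3w wy by simp
        ultimately show ?thesis using step4[OF g3 gxr fv3 c3ux] by blast
      qed
    qed
  qed
qed

end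

lemma edge_V: assumes "simple_graph V E" "{a,b} \<in> E" shows "a \<in> V \<and> b \<in> V \<and> a \<noteq> b"
proof -
  obtain p q where "p \<in> V" "q \<in> V" "p \<noteq> q" "{a,b} = {p,q}" using assms unfolding simple_graph_def by blast
  thus ?thesis by (auto simp: doubleton_eq_iff)
qed

lemma edge_form: assumes sg: "simple_graph V E" and e: "e \<in> E" and a: "a \<in> e"
  shows "\<exists>b\<in>{b\<in>V. {a,b}\<in>E}. e = {a,b}"
proof -
  have "e \<in> (\<lambda>b. {a,b}) ` {b\<in>V. {a,b}\<in>E}" by (rule subsetD[OF edges_at[OF sg, of a]]) (simp add: e a)
  thus ?thesis unfolding image_iff .
qed

lemma xw_case:
  assumes sg: "simple_graph V E" and g: "good V E (E - {{u,v}}) {u,w} cv ce" and m: "m \<in> {1..9}"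
    and fv: "freec (E - {{u,v}}) {u,w} cv ce v m"
    and Eu: "\<And>e. e\<in>E \<Longrightarrow> u\<in>e \<Longrightarrow> e = {u,v} \<or> e = {u,w}"
    and uv: "{u,v} \<in> E" and uw: "{u,w} \<in> E" and d: "u \<noteq> v" "u \<noteq> w" "v \<noteq> w"
    and degw: "degree V E w \<le> 3"
  shows "\<exists>ce'. good V E E {u,w} cv ce'"
proof (cases "ce {u,w} = m")
  case False thus ?thesis using case1[OF g _ m fv Eu uv False] by simp
next
  case True
  let ?E' = "E - {{u,v}}"
  let ?E9 = "?E' - {{u,w}}"
  let ?S = "{e\<in>?E9. w\<in>e}"
  let ?F = "{m} \<union> ce ` ?S"
  have sub9: "?E9 \<subseteq> E" by blast
  have finS: "finite ?S" by (rule finite_edges_at[OF sg sub9])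
  have "card ?S \<le> degree V E w" by (rule card_edges_at[OF sg sub9])
  hence cS: "card ?S \<le> 3" using degw by linarith
  have "card ?F \<le> card {m} + card (ce ` ?S)" by (rule card_Un_le)
  also have "\<dots> \<le> 1 + card ?S" using card_image_le[OF finS, of ce] by simp
  finally have c9: "card ?F < 9" using cS by linarith
  have finF: "finite ?F" using finS by simp
  from exists_color[OF finF c9] obtain k where k: "k \<in> {1..9}" "k \<notin> ?F" ..
  have uwE': "{u,w} \<in> ?E'" using uw d by (auto simp: doubleton_eq_iff)
  have g9: "good V E ?E9 {u,w} cv ce" by (rule good_mono[OF g]) blast
  have fu: "freec ?E9 {u,w} cv ce u k"
  proof (rule freecI)
    show "u \<notin> {u,w} \<Longrightarrow> cv u \<noteq> k" by simp
    fix e assume e: "e \<in> ?E9" "u \<in> e"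
    hence False using Eu by auto
    thus "ce e \<noteq> k" ..
  qed
  have fw: "freec ?E9 {u,w} cv ce w k"
  proof (rule freecI)
    show "w \<notin> {u,w} \<Longrightarrow> cv w \<noteq> k" by simp
    fix e assume e: "e \<in> ?E9" "w \<in> e"
    hence "ce e \<in> ce ` ?S" by (intro imageI) simp
    thus "ce e \<noteq> k" using k(2) by (metis UnI2)
  qed
  have gA: "good V E (insert {u,w} ?E9) {u,w} cv (ce({u,w}:=k))"
    by (rule good_add[OF g9 _ k(1) fu fw]) simp
  have seq: "insert {u,w} ?E9 = ?E'" using uwE' by blast
  have gA': "good V E ?E' {u,w} cv (ce({u,w}:=k))" using gA seq by simp
  have "freec ?E9 {u,w} cv ce v m" by (rule freec_mono[OF fv]) blast
  hence "freec (insert {u,w} ?E9) {u,w} cv (ce({u,w}:=k)) v m" by (rule freec_add) (use d in auto)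
  hence fv': "freec ?E' {u,w} cv (ce({u,w}:=k)) v m" using seq by simp
  have km: "(ce({u,w}:=k)) {u,w} \<noteq> m" using k(2) by simp
  show ?thesis by (rule case1[OF gA' _ m fv' Eu uv km]) simp
qed

theorem lemma2p6:
  fixes V :: "'a set" and E :: "'a set set"
    and pos :: "'a \<Rightarrow> complex" and \<gamma> :: "'a set \<Rightarrow> real \<Rightarrow> complex"
  assumes "min_counterexample V E"
    and "plane_embedding V E pos \<gamma>"
    and "v \<in> V" and "degree V E v = 8"
    and "\<exists>u\<in>V. degree V E u = 2 \<and> {v, u} \<in> E \<and> edge_on_3face V E pos \<gamma> {v, u}"
  shows "\<not> (\<exists>w\<in>V. degree V E w = 3 \<and> {v, w} \<in> E \<and> edge_on_3face V E pos \<gamma> {v, w})"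
proof
  assume "\<exists>w\<in>V. degree V E w = 3 \<and> {v, w} \<in> E \<and> edge_on_3face V E pos \<gamma> {v, w}"
  then obtain w where wV: "w \<in> V" and dw: "degree V E w = 3" and vw: "{v,w} \<in> E"
    and fw: "edge_on_3face V E pos \<gamma> {v,w}" by blast
  from assms(5) obtain u where uV: "u \<in> V" and du: "degree V E u = 2" and vu: "{v,u} \<in> E"
    and fu: "edge_on_3face V E pos \<gamma> {v,u}" by blast
  have sg: "simple_graph V E" and md: "max_degree_eq V E 8" and nf: "\<not> has_4fan V E"
    and nc: "\<not> total_colorable 9 V E"
    and minl: "\<forall>(VH :: nat set) EH. simple_graph VH EH \<and> planar VH EH \<and>
        (\<forall>x\<in>VH. degree VH EH x \<le> 8) \<and> \<not> has_4fan VH EH \<and>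
        card VH + card EH < card V + card E \<longrightarrow> total_colorable 9 VH EH"
    using assms(1) unfolding min_counterexample_def by auto
  have deg: "\<forall>a\<in>V. degree V E a \<le> 8" using md unfolding max_degree_eq_def by simp
  have finV: "finite V" using sg unfolding simple_graph_def by simp
  obtain x where x: "x \<noteq> v" "x \<noteq> u" "{v,x} \<in> E" "{u,x} \<in> E" using tri[OF assms(2) vu fu] by blast
  obtain y where y: "y \<noteq> v" "y \<noteq> w" "{v,y} \<in> E" "{w,y} \<in> E" using tri[OF assms(2) vw fw] by blast
  have uv: "{u,v} \<in> E" using vu by (simp add: insert_commute)
  have xV: "x \<in> V" using edge_V[OF sg x(3)] by simp
  have yV: "y \<in> V" using edge_V[OF sg y(3)] by simp
  have uv_ne: "u \<noteq> v" using edge_V[OF sg uv] by simp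
  have vw_ne: "v \<noteq> w" using edge_V[OF sg vw] by simp
  have uw_ne: "u \<noteq> w" using du dw by auto
  let ?Nu = "{b\<in>V. {u,b}\<in>E}"
  let ?Nw = "{b\<in>V. {w,b}\<in>E}"
  have finNu: "finite ?Nu" using finV by simp
  have finNw: "finite ?Nw" using finV by simp
  have Nu: "?Nu = {v,x}"
  proof -
    have s: "{v,x} \<subseteq> ?Nu" using assms(3) xV uv x by auto
    have "card {v,x} = 2" using x by simp
    also have "\<dots> = card ?Nu" using du unfolding degree_def by simp
    finally show ?thesis using card_subset_eq[OF finNu s] by simp
  qed
  have vwE: "{w,v} \<in> E" using vw by (simp add: insert_commute)
  have s2: "{v,y} \<subseteq> ?Nw" using assms(3) yV vwE y by auto
  have "card (?Nw - {v,y}) = card ?Nw - card {v,y}" by (rule card_Diff_subset) (use s2 in auto)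
  also have "\<dots> = 1" using dw y unfolding degree_def by simp
  finally obtain z where z: "?Nw - {v,y} = {z}" using card_1_singleton_iff by (metis One_nat_def)
  have Nw: "?Nw = {v,y,z}" using z s2 by blast
  have zV: "z \<in> V" and wz: "{w,z} \<in> E" and zvy: "z \<noteq> v" "z \<noteq> y" using z by auto
  have wz_ne: "w \<noteq> z" using edge_V[OF sg wz] by simp
  have Eu: "\<And>e. e\<in>E \<Longrightarrow> u\<in>e \<Longrightarrow> e = {u,v} \<or> e = {u,x}"
  proof -
    fix e assume "e \<in> E" "u \<in> e"
    then obtain b where "b \<in> ?Nu" "e = {u,b}" using edge_form[OF sg] by blast
    thus "e = {u,v} \<or> e = {u,x}" using Nu by auto
  qed
  have Ew: "\<And>e. e\<in>E \<Longrightarrow> w\<in>e \<Longrightarrow> e = {w,v} \<or> e = {w,y} \<or> e = {w,z}"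
  proof -
    fix e assume "e \<in> E" "w \<in> e"
    then obtain b where "b \<in> ?Nw" "e = {w,b}" using edge_form[OF sg] by blast
    thus "e = {w,v} \<or> e = {w,y} \<or> e = {w,z}" using Nw by auto
  qed
  let ?E' = "E - {{u,v}}"
  have finE: "finite E"
  proof -
    have "E \<subseteq> Pow V" using sg unfolding simple_graph_def by fastforce
    thus ?thesis using finV by (meson finite_Pow_iff finite_subset)
  qed
  have ltE: "card ?E' < card E" by (rule card_Diff1_less[OF finE uv])
  have "total_colorable 9 V ?E'" by (rule transfer[OF sg assms(2) _ ltE deg nf minl]) blast
  then obtain cv ce where tc: "total_coloring 9 V ?E' cv ce" unfolding total_colorable_def by blast
  have g0: "good V E ?E' {u,w} cv ce"
  proof (rule goodI)
    show "\<And>a. a\<in>V \<Longrightarrow> cv a \<in> {1..9}" using tc unfolding total_coloring_def by simp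
    show "\<And>e. e\<in>?E' \<Longrightarrow> ce e \<in> {1..9}" using tc unfolding total_coloring_def by simp
    show "\<And>e e'. e\<in>?E' \<Longrightarrow> e'\<in>?E' \<Longrightarrow> e \<noteq> e' \<Longrightarrow> e \<inter> e' \<noteq> {} \<Longrightarrow> ce e \<noteq> ce e'"
      using tc unfolding total_coloring_def by simp
    show "\<And>e a. e\<in>?E' \<Longrightarrow> a\<in>e \<Longrightarrow> a \<notin> {u,w} \<Longrightarrow> cv a \<noteq> ce e"
      using tc unfolding total_coloring_def by simp
    fix a b assume ab: "a\<in>V" "b\<in>V" "{a,b} \<in> E" "a \<notin> {u,w}" "b \<notin> {u,w}"
    hence "{a,b} \<in> ?E'" by (auto simp: doubleton_eq_iff)
    thus "cv a \<noteq> cv b" using tc ab unfolding total_coloring_def by simp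
  qed
  let ?Sv = "{e\<in>?E'. v\<in>e}"
  have finSv: "finite ?Sv" by (rule finite_edges_at[OF sg]) blast
  have "card {e\<in>E. v\<in>e} \<le> 8" using card_edges_at[OF sg, of E v] assms(4) by simp
  moreover have "?Sv = {e\<in>E. v\<in>e} - {{u,v}}" by blast
  moreover have "{u,v} \<in> {e\<in>E. v\<in>e}" using uv by simp
  ultimately have cSv: "card ?Sv \<le> 7" by (simp add: card_Diff_singleton)
  let ?Fv = "{cv v} \<union> ce ` ?Sv"
  have "card ?Fv \<le> card {cv v} + card (ce ` ?Sv)" by (rule card_Un_le)
  also have "\<dots> \<le> 1 + card ?Sv" using card_image_le[OF finSv, of ce] by simp
  finally have c9: "card ?Fv < 9" using cSv by linarith
  have finFv: "finite ?Fv" using finSv by simp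
  from exists_color[OF finFv c9] obtain m where m: "m \<in> {1..9}" "m \<notin> ?Fv" ..
  have fvm: "freec ?E' {u,w} cv ce v m"
  proof (rule freecI)
    show "cv v \<noteq> m" using m(2) by auto
    fix e assume "e \<in> ?E'" "v \<in> e"
    hence "ce e \<in> ce ` ?Sv" by (intro imageI) simp
    thus "ce e \<noteq> m" using m(2) by (metis UnI2)
  qed
  have "\<exists>ce'. good V E E {u,w} cv ce'"
  proof (cases "x = w")
    case True
    have Eu': "\<And>e. e\<in>E \<Longrightarrow> u\<in>e \<Longrightarrow> e = {u,v} \<or> e = {u,w}" using Eu True by simp
    show ?thesis
      by (rule xw_case[OF sg g0 m(1) fvm Eu' uv _ uv_ne uw_ne vw_ne]) (use x True dw in simp_all)
  next
    case False
    have uy: "u \<noteq> y"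
    proof
      assume "u = y"
      hence "{w,u} \<in> E" using y by simp
      hence "{w,u} = {u,v} \<or> {w,u} = {u,x}" using Eu by simp
      thus False using vw_ne uw_ne False by (auto simp: doubleton_eq_iff)
    qed
    have uz: "u \<noteq> z"
    proof
      assume "u = z"
      hence "{w,u} \<in> E" using wz by simp
      hence "{w,u} = {u,v} \<or> {w,u} = {u,x}" using Eu by simp
      thus False using vw_ne uw_ne False by (auto simp: doubleton_eq_iff)
    qed
    interpret conf V E v u x w y z
      apply unfold_locales
      using Eu Ew uv x y wz vw uv_ne uw_ne vw_ne False uy uz zvy wz_ne by auto
    show ?thesis by (rule main[OF g0 m(1) fvm])
  qed
  then obtain ce' where g1: "good V E E {u,w} cv ce'" by blast
  have "good V E E (insert u {w}) cv ce'" using g1 by simp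
  from recolor[OF this sg _ uV] du obtain k1 where g2: "good V E E {w} (cv(u:=k1)) ce'" by auto
  have "good V E E (insert w {}) (cv(u:=k1)) ce'" using g2 by simp
  from recolor[OF this sg _ wV] dw obtain k2 where g3: "good V E E {} (cv(u:=k1, w:=k2)) ce'" by auto
  have "total_coloring 9 V E (cv(u:=k1, w:=k2)) ce'" by (rule good_total[OF g3]) simp
  hence "total_colorable 9 V E" unfolding total_colorable_def by blast
  thus False using nc by simp
qed

end
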